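(* Let $k\geqslant 2$ and $m_1,\ldots,m_k\geqslant 2$. Write $S^{m_i}=\{(\mathbf{x}_i,z_i):\mathbf{x}_i\in\mathbb{R}^{m_i-1},\ z_i\in\mathbb{C},\ |\mathbf{x}_i|^2+|z_i|^2=1\}$. Let the torus $T^{k-1}=U(1)^{k-1}$ act on $S^{m_1}\times\cdots\times S^{m_k}$ by \[ (r_1,\ldots,r_{k-1})\cdot((\mathbf{x}_1,z_1),\ldots,(\mathbf{x}_k,z_k))=((\mathbf{x}_1,z_1r_1^{-1}),(\mathbf{x}_2,r_1z_2r_2^{-1}),\ldots,(\mathbf{x}_{k-1},r_{k-2}z_{k-1}r_{k-1}^{-1}),(\mathbf{x}_k,r_{k-1}z_k)). \] Then the orbit space $(S^{m_1}\times\cdots\times S^{m_k})/T^{k-1}$ is homeomorphic to the sphere $S^m$, $m=m_1+\cdots+m_k-(k-1)$, and the canonical projection onto the orbit space is given by \[ ((\mathbf{x}_1,z_1),\ldots,(\mathbf{x}_k,z_k))\mapsto\frac{(\mathbf{x}_1,\ldots,\mathbf{x}_k,z_1z_2\cdots z_k)}{\sqrt{|\mathbf{x}_1|^2+\cdots+|\mathbf{x}_k|^2+|z_1z_2\cdots z_k|^2}}\in S^m\subset\mathbb{R}^{m_1-1}\times\cdots\times\mathbb{R}^{m_k-1}\times\mathbb{C}. \] *)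

theory Defs
  imports "HOL-Analysis.Analysis"
begin

(* R^n as functions {..<n} -> real (extensional), with the product (= Euclidean) topology *)
definition Rvec_top :: "nat \<Rightarrow> (nat \<Rightarrow> real) topology" where
  "Rvec_top n = product_topology (\<lambda>_. euclideanreal) {..<n}"

definition sph_factor :: "nat \<Rightarrow> ((nat \<Rightarrow> real) \<times> complex) topology" where
  "sph_factor n = subtopology (prod_topology (Rvec_top (n - 1)) euclidean)
     {(x, z). x \<in> topspace (Rvec_top (n - 1)) \<and> (\<Sum>j<n - 1. (x j)\<^sup>2) + (cmod z)\<^sup>2 = 1}"

(* S^{m_0} x ... x S^{m_(k-1)} (factors indexed 0..k-1) with the product topology *)
definition sph_product :: "nat \<Rightarrow> (nat \<Rightarrow> nat) \<Rightarrow> (nat \<Rightarrow> (nat \<Rightarrow> real) \<times> complex) topology" where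
  "sph_product k m = product_topology (\<lambda>i. sph_factor (m i)) {..<k}"

definition target_sphere :: "nat \<Rightarrow> (nat \<Rightarrow> nat) \<Rightarrow> ((nat \<Rightarrow> nat \<Rightarrow> real) \<times> complex) topology" where
  "target_sphere k m = subtopology
     (prod_topology (product_topology (\<lambda>i. Rvec_top (m i - 1)) {..<k}) euclidean)
     {(x, w). x \<in> topspace (product_topology (\<lambda>i. Rvec_top (m i - 1)) {..<k}) \<and>
              (\<Sum>i<k. \<Sum>j<m i - 1. (x i j)\<^sup>2) + (cmod w)\<^sup>2 = 1}"

(* the torus T^(k-1) = U(1)^(k-1), coordinates r_0..r_(k-2) *)
definition torus :: "nat \<Rightarrow> (nat \<Rightarrow> complex) set" where
  "torus k = PiE {..<k - 1} (\<lambda>_. sphere 0 1)"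

definition torus_act :: "nat \<Rightarrow> (nat \<Rightarrow> complex) \<Rightarrow> (nat \<Rightarrow> (nat \<Rightarrow> real) \<times> complex)
    \<Rightarrow> (nat \<Rightarrow> (nat \<Rightarrow> real) \<times> complex)" where
  "torus_act k r p = (\<lambda>i\<in>{..<k}. (fst (p i),
      (if i = 0 then 1 else r (i - 1)) * snd (p i) * inverse (if i < k - 1 then r i else 1)))"

definition orbit_proj :: "nat \<Rightarrow> (nat \<Rightarrow> nat) \<Rightarrow> (nat \<Rightarrow> (nat \<Rightarrow> real) \<times> complex)
    \<Rightarrow> (nat \<Rightarrow> nat \<Rightarrow> real) \<times> complex" where
  "orbit_proj k m p =
    (let d = sqrt ((\<Sum>i<k. \<Sum>j<m i - 1. (fst (p i) j)\<^sup>2) + (cmod (\<Prod>i<k. snd (p i)))\<^sup>2)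
     in ((\<lambda>i\<in>{..<k}. \<lambda>j\<in>{..<m i - 1}. fst (p i) j / d),
         (\<Prod>i<k. snd (p i)) / complex_of_real d))"

end

theory Submission
  imports Defs
begin

lemma cm_mult:
  fixes f g :: "'a \<Rightarrow> 'b::real_normed_algebra"
  shows "continuous_map X euclidean f \<Longrightarrow> continuous_map X euclidean g \<Longrightarrow> continuous_map X euclidean (\<lambda>x. f x * g x)"
  by (simp add: continuous_map_atin tendsto_mult)

lemma cm_prod:
  fixes f :: "'a \<Rightarrow> 'i \<Rightarrow> 'b::{real_normed_algebra_1,comm_ring_1}"
  shows "finite I \<Longrightarrow> (\<And>i. i \<in> I \<Longrightarrow> continuous_map X euclidean (\<lambda>x. f x i)) \<Longrightarrow> continuous_map X euclidean (\<lambda>x. prod (f x) I)"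
  by (simp add: continuous_map_atin tendsto_prod)

lemma cm_divide:
  fixes f g :: "'a \<Rightarrow> 'b::real_normed_field"
  shows "continuous_map X euclidean f \<Longrightarrow> continuous_map X euclidean g \<Longrightarrow> (\<And>x. x \<in> topspace X \<Longrightarrow> g x \<noteq> 0) \<Longrightarrow> continuous_map X euclidean (\<lambda>x. f x / g x)"
  by (simp add: continuous_map_atin tendsto_divide)

lemma cm_of_real:
  shows "continuous_map X euclideanreal f \<Longrightarrow> continuous_map X euclidean (\<lambda>x. complex_of_real (f x))"
  by (simp add: continuous_map_atin tendsto_of_real)

lemma cm_sqrt:
  shows "continuous_map X euclideanreal f \<Longrightarrow> continuous_map X euclideanreal (\<lambda>x. sqrt (f x))"
  by (simp add: continuous_map_atin tendsto_real_sqrt)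

lemma cm_power:
  fixes f :: "'a \<Rightarrow> 'b::real_normed_algebra_1"
  shows "continuous_map X euclidean f \<Longrightarrow> continuous_map X euclidean (\<lambda>x. (f x)^n)"
  by (simp add: continuous_map_atin tendsto_power)

lemma top_sp: "topspace (sph_product k m) = PiE {..<k} (\<lambda>i. {(x,z). x \<in> PiE {..<m i - 1} (\<lambda>_. UNIV) \<and> (\<Sum>j<m i - 1. (x j)\<^sup>2) + (cmod z)\<^sup>2 = 1})"
  unfolding sph_product_def sph_factor_def Rvec_top_def
  by (simp, rule PiE_cong, auto)

lemma top_ts: "topspace (target_sphere k m) = {(x,w). x \<in> PiE {..<k} (\<lambda>i. PiE {..<m i - 1} (\<lambda>_. UNIV)) \<and> (\<Sum>i<k. \<Sum>j<m i - 1. (x i j)\<^sup>2) + (cmod w)\<^sup>2 = 1}"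
  by (auto simp add: target_sphere_def Rvec_top_def)

lemma cont_x:
  assumes "i < k" "j < m i - 1"
  shows "continuous_map (sph_product k m) euclideanreal (\<lambda>p. fst (p i) j)"
proof -
  have a: "continuous_map (sph_product k m) (sph_factor (m i)) (\<lambda>p. p i)"
    unfolding sph_product_def by (rule continuous_map_product_projection) (use assms in simp)
  have b: "continuous_map (sph_factor (m i)) (Rvec_top (m i - 1)) fst"
    unfolding sph_factor_def by (intro continuous_map_from_subtopology continuous_map_fst)
  have c: "continuous_map (Rvec_top (m i - 1)) euclideanreal (\<lambda>x. x j)"
    unfolding Rvec_top_def by (rule continuous_map_product_projection) (use assms in simp)
  show ?thesis using continuous_map_compose[OF continuous_map_compose[OF a b] c] by (simp add: o_def)
qed

lemma cont_z:
  assumes "i < k"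
  shows "continuous_map (sph_product k m) euclidean (\<lambda>p. snd (p i))"
proof -
  have a: "continuous_map (sph_product k m) (sph_factor (m i)) (\<lambda>p. p i)"
    unfolding sph_product_def by (rule continuous_map_product_projection) (use assms in simp)
  have b: "continuous_map (sph_factor (m i)) euclidean snd"
    unfolding sph_factor_def by (intro continuous_map_from_subtopology continuous_map_snd)
  show ?thesis using continuous_map_compose[OF a b] by (simp add: o_def)
qed

definition dsq :: "nat \<Rightarrow> (nat \<Rightarrow> nat) \<Rightarrow> (nat \<Rightarrow> (nat \<Rightarrow> real) \<times> complex) \<Rightarrow> real" where
  "dsq k m p = (\<Sum>i<k. \<Sum>j<m i - 1. (fst (p i) j)\<^sup>2) + (cmod (\<Prod>i<k. snd (p i)))\<^sup>2"

lemma orbit_proj_alt: "orbit_proj k m p = ((\<lambda>i\<in>{..<k}. \<lambda>j\<in>{..<m i - 1}. fst (p i) j / sqrt (dsq k m p)),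
         (\<Prod>i<k. snd (p i)) / complex_of_real (sqrt (dsq k m p)))"
  by (simp add: orbit_proj_def dsq_def Let_def)

lemma sp_mem:
  assumes "p \<in> topspace (sph_product k m)" "i < k"
  shows "(\<Sum>j<m i - 1. (fst (p i) j)\<^sup>2) + (cmod (snd (p i)))\<^sup>2 = 1" "fst (p i) \<in> PiE {..<m i - 1} (\<lambda>_. UNIV)"
  using assms by (auto simp: top_sp PiE_iff case_prod_unfold)

lemma sp_ext: "p \<in> topspace (sph_product k m) \<Longrightarrow> p \<in> extensional {..<k}"
  by (simp add: top_sp PiE_iff)

lemma dsq_pos:
  assumes p: "p \<in> topspace (sph_product k m)"
  shows "dsq k m p > 0"
proof (cases "(\<Sum>i<k. \<Sum>j<m i - 1. (fst (p i) j)\<^sup>2) > 0")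
  case True
  then show ?thesis unfolding dsq_def by (simp add: add_pos_nonneg)
next
  case False
  have nn: "\<And>i. 0 \<le> (\<Sum>j<m i - 1. (fst (p i) j)\<^sup>2)" by (simp add: sum_nonneg)
  hence s0: "(\<Sum>i<k. \<Sum>j<m i - 1. (fst (p i) j)\<^sup>2) = 0" using False by (meson not_less order_antisym sum_nonneg)
  hence z: "\<forall>i\<in>{..<k}. (\<Sum>j<m i - 1. (fst (p i) j)\<^sup>2) = 0" using nn by (simp add: sum_nonneg_eq_0_iff)
  have "\<forall>i\<in>{..<k}. cmod (snd (p i)) = 1"
  proof
    fix i assume i: "i \<in> {..<k}"
    have "(cmod (snd (p i)))\<^sup>2 = 1" using sp_mem(1)[OF p] i z by force
    thus "cmod (snd (p i)) = 1" using norm_ge_zero[of "snd (p i)"] by (auto simp: power2_eq_1_iff)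
  qed
  hence "cmod (\<Prod>i<k. snd (p i)) = 1" by (simp add: prod_norm[symmetric])
  then show ?thesis unfolding dsq_def using s0 by simp
qed

lemma cont_dsq: "continuous_map (sph_product k m) euclideanreal (dsq k m)"
  unfolding dsq_def
  by (intro continuous_map_add continuous_map_sum cm_power continuous_map_norm cm_prod cont_z cont_x finite_lessThan) auto

lemma proj_in:
  assumes p: "p \<in> topspace (sph_product k m)"
  shows "orbit_proj k m p \<in> topspace (target_sphere k m)"
proof -
  have D: "dsq k m p > 0" using dsq_pos[OF p] .
  define s where "s = sqrt (dsq k m p)"
  have s2: "s\<^sup>2 = dsq k m p" using D by (simp add: s_def)
  have s0: "s > 0" using D by (simp add: s_def)
  have e1: "(\<Sum>i<k. \<Sum>j<m i - 1. ((\<lambda>i\<in>{..<k}. \<lambda>j\<in>{..<m i - 1}. fst (p i) j / s) i j)\<^sup>2)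
      = (\<Sum>i<k. \<Sum>j<m i - 1. (fst (p i) j)\<^sup>2) / s\<^sup>2"
    by (simp add: sum_divide_distrib power_divide)
  have e2: "(cmod ((\<Prod>i<k. snd (p i)) / complex_of_real s))\<^sup>2 = (cmod (\<Prod>i<k. snd (p i)))\<^sup>2 / s\<^sup>2"
    using s0 by (simp add: norm_divide power_divide)
  have "(\<Sum>i<k. \<Sum>j<m i - 1. ((\<lambda>i\<in>{..<k}. \<lambda>j\<in>{..<m i - 1}. fst (p i) j / s) i j)\<^sup>2)
      + (cmod ((\<Prod>i<k. snd (p i)) / complex_of_real s))\<^sup>2 = 1"
    unfolding e1 e2 s2 add_divide_distrib[symmetric] using D unfolding dsq_def by simp
  then show ?thesis unfolding orbit_proj_alt top_ts s_def[symmetric] by auto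
qed

lemma cont_proj: "continuous_map (sph_product k m) (target_sphere k m) (orbit_proj k m)"
proof -
  have sq: "continuous_map (sph_product k m) euclideanreal (\<lambda>p. sqrt (dsq k m p))"
    by (intro cm_sqrt cont_dsq)
  have nz: "\<And>p. p \<in> topspace (sph_product k m) \<Longrightarrow> sqrt (dsq k m p) \<noteq> 0"
    using dsq_pos by fastforce
  have c1: "continuous_map (sph_product k m) (product_topology (\<lambda>i. Rvec_top (m i - 1)) {..<k})
     (\<lambda>p. \<lambda>i\<in>{..<k}. \<lambda>j\<in>{..<m i - 1}. fst (p i) j / sqrt (dsq k m p))"
    unfolding continuous_map_componentwise
  proof (intro conjI ballI)
    fix i assume i: "i \<in> {..<k}"
    show "continuous_map (sph_product k m) (Rvec_top (m i - 1))
         (\<lambda>x. (\<lambda>i\<in>{..<k}. \<lambda>j\<in>{..<m i - 1}. fst (x i) j / sqrt (dsq k m x)) i)"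
      unfolding Rvec_top_def continuous_map_componentwise
      using i by (auto intro!: continuous_map_real_divide cont_x sq nz)
  qed auto
  have c2: "continuous_map (sph_product k m) euclidean
     (\<lambda>p. (\<Prod>i<k. snd (p i)) / complex_of_real (sqrt (dsq k m p)))"
    using nz by (intro cm_divide cm_prod cm_of_real sq cont_z) auto
  have "continuous_map (sph_product k m) (prod_topology (product_topology (\<lambda>i. Rvec_top (m i - 1)) {..<k}) euclidean) (orbit_proj k m)"
    unfolding orbit_proj_alt by (intro continuous_map_pairedI c1 c2)
  moreover have "orbit_proj k m \<in> topspace (sph_product k m) \<rightarrow> topspace (target_sphere k m)"
    using proj_in by blast
  ultimately show ?thesis unfolding target_sphere_def continuous_map_in_subtopology
    by (simp add: Pi_iff)
qed

lemma compact_factor: "compact_space (sph_factor n)"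
proof -
  define R where "R = Rvec_top (n - 1)"
  define X where "X = prod_topology R (euclidean :: complex topology)"
  define S where "S = {(x, z). x \<in> topspace R \<and> (\<Sum>j<n - 1. (x j)\<^sup>2) + (cmod z)\<^sup>2 = 1}"
  define K where "K = (PiE {..<n - 1} (\<lambda>_. {-1..1::real})) \<times> cball (0::complex) 1"
  have cK: "compactin X K"
    unfolding X_def K_def compactin_Times R_def Rvec_top_def compactin_PiE by auto
  have SK: "S \<subseteq> K"
  proof
    fix p assume "p \<in> S"
    then obtain x z where p: "p = (x, z)" and x: "x \<in> topspace R" and e: "(\<Sum>j<n - 1. (x j)\<^sup>2) + (cmod z)\<^sup>2 = 1"
      unfolding S_def by auto
    have xe: "x \<in> extensional {..<n - 1}" using x by (simp add: R_def Rvec_top_def PiE_iff)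
    have nn: "0 \<le> (\<Sum>j<n - 1. (x j)\<^sup>2)" by (simp add: sum_nonneg)
    have "\<And>j. j < n - 1 \<Longrightarrow> \<bar>x j\<bar> \<le> 1"
    proof -
      fix j assume j: "j < n - 1"
      have "(x j)\<^sup>2 \<le> (\<Sum>j<n - 1. (x j)\<^sup>2)" by (rule member_le_sum) (use j in auto)
      hence "(x j)\<^sup>2 \<le> 1" using e by (smt (verit) zero_le_power2)
      thus "\<bar>x j\<bar> \<le> 1" by (simp add: abs_square_le_1)
    qed
    moreover have "(cmod z)\<^sup>2 \<le> 1" using e nn by linarith
    hence "cmod z \<le> 1" by (simp add: abs_square_le_1)
    ultimately show "p \<in> K" unfolding K_def p using xe by (auto simp: PiE_iff abs_le_iff)
  qed
  have cg: "continuous_map X euclideanreal (\<lambda>p. (\<Sum>j<n - 1. (fst p j)\<^sup>2) + (cmod (snd p))\<^sup>2)"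
  proof -
    have "\<And>j. j \<in> {..<n - 1} \<Longrightarrow> continuous_map X euclideanreal (\<lambda>p. fst p j)"
    proof -
      fix j assume j: "j \<in> {..<n - 1}"
      have "continuous_map X R fst" unfolding X_def by (rule continuous_map_fst)
      moreover have "continuous_map R euclideanreal (\<lambda>x. x j)" unfolding R_def Rvec_top_def
        by (rule continuous_map_product_projection) (use j in simp)
      ultimately show "continuous_map X euclideanreal (\<lambda>p. fst p j)"
        using continuous_map_compose by (fastforce simp: o_def)
    qed
    moreover have "continuous_map X euclidean snd" unfolding X_def by (rule continuous_map_snd)
    ultimately show ?thesis
      by (intro continuous_map_add continuous_map_sum cm_power continuous_map_norm finite_lessThan) auto
  qed
  have "S = {p \<in> topspace X. (\<lambda>p. (\<Sum>j<n - 1. (fst p j)\<^sup>2) + (cmod (snd p))\<^sup>2) p \<in> {1}}"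
    unfolding S_def X_def by auto
  hence cS: "closedin X S" using closedin_continuous_map_preimage[OF cg, of "{1}"] by simp
  have "compactin X S" by (rule closed_compactin[OF cK SK cS])
  thus ?thesis unfolding sph_factor_def R_def[symmetric] X_def[symmetric] S_def[symmetric]
    by (rule compact_space_subtopology)
qed

lemma compact_sp: "compact_space (sph_product k m)"
  unfolding sph_product_def compact_space_product_topology using compact_factor by blast

lemma hausdorff_ts: "Hausdorff_space (target_sphere k m)"
  unfolding target_sphere_def Rvec_top_def
  by (intro Hausdorff_space_subtopology) (simp add: Hausdorff_space_prod_topology Hausdorff_space_product_topology)

lemma scalar_contra:
  fixes a :: "nat \<Rightarrow> real"
  assumes "finite I" "\<forall>i\<in>I. 0 \<le> a i" "\<forall>i\<in>I. 0 \<le> 1 - a i" "\<forall>i\<in>I. 0 \<le> 1 - L * a i" "L > 1"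
    and eq: "(\<Prod>i\<in>I. 1 - L * a i) = L * (\<Prod>i\<in>I. 1 - a i)"
  shows False
proof -
  have QP: "(\<Prod>i\<in>I. 1 - L * a i) \<le> (\<Prod>i\<in>I. 1 - a i)"
  proof (rule prod_mono)
    fix i assume i: "i \<in> I"
    have "a i \<le> L * a i" using assms(2) i \<open>L > 1\<close> by (simp add: mult_le_cancel_right1 not_less)
    thus "0 \<le> 1 - L * a i \<and> 1 - L * a i \<le> 1 - a i" using assms(4) i by auto
  qed
  have P0: "0 \<le> (\<Prod>i\<in>I. 1 - a i)" using assms(3) by (simp add: prod_nonneg)
  show False
  proof (cases "(\<Prod>i\<in>I. 1 - a i) = 0")
    case True
    then obtain i where i: "i \<in> I" "1 - a i = 0" using assms(1) by auto
    then show False using assms(4) \<open>L > 1\<close> by force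
  next
    case False
    hence "(\<Prod>i\<in>I. 1 - a i) < L * (\<Prod>i\<in>I. 1 - a i)" using P0 \<open>L > 1\<close> by simp
    thus False using QP eq by simp
  qed
qed

lemma units_exist:
  fixes z w :: "nat \<Rightarrow> complex"
  assumes nw: "\<forall>i<k. cmod (w i) = cmod (z i)" and pw: "(\<Prod>i<k. w i) = (\<Prod>i<k. z i)"
  shows "\<exists>u. (\<forall>i<k. cmod (u i) = 1 \<and> w i = u i * z i) \<and> (\<Prod>i<k. u i) = 1"
proof -
  define u0 where "u0 i = (if z i = 0 then 1 else w i / z i)" for i
  have u0: "\<forall>i<k. cmod (u0 i) = 1 \<and> w i = u0 i * z i"
    using nw by (auto simp: u0_def norm_divide)
  show ?thesis
  proof (cases "\<forall>i<k. z i \<noteq> 0")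
    case True
    have "(\<Prod>i<k. u0 i) = (\<Prod>i<k. w i / z i)" using True by (simp add: u0_def)
    also have "\<dots> = 1" using True pw by (simp add: prod_dividef)
    finally show ?thesis using u0 by blast
  next
    case False
    then obtain j where j: "j < k" "z j = 0" by auto
    define u where "u = u0(j := inverse (\<Prod>i\<in>{..<k}-{j}. u0 i))"
    have "(\<Prod>i<k. u i) = u j * (\<Prod>i\<in>{..<k}-{j}. u i)" using j by (simp add: prod.remove)
    also have "(\<Prod>i\<in>{..<k}-{j}. u i) = (\<Prod>i\<in>{..<k}-{j}. u0 i)" by (rule prod.cong) (auto simp: u_def)
    also have "(\<Prod>i\<in>{..<k}-{j}. u0 i) \<noteq> 0" using u0 by (auto simp: prod_zero_iff)
    hence "u j * (\<Prod>i\<in>{..<k}-{j}. u0 i) = 1" by (simp add: u_def)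
    finally have pu: "(\<Prod>i<k. u i) = 1" .
    have nuj: "cmod (u j) = 1" using u0 by (simp add: u_def norm_inverse prod_norm[symmetric])
    have "w j = 0" using nw j by auto
    hence "\<forall>i<k. cmod (u i) = 1 \<and> w i = u i * z i" using u0 nuj j by (auto simp: u_def)
    thus ?thesis using pu by blast
  qed
qed

definition cfac :: "nat \<Rightarrow> (nat \<Rightarrow> complex) \<Rightarrow> nat \<Rightarrow> complex" where
  "cfac k r i = (if i = 0 then 1 else r (i - 1)) * inverse (if i < k - 1 then r i else 1)"

lemma tele:
  assumes nz: "\<forall>i<k-1. r i \<noteq> 0" and k: "k \<ge> 2"
  shows "(\<Prod>i<k. cfac k r i) = 1"
proof -
  have "\<forall>n. 1 \<le> n \<longrightarrow> n \<le> k - 1 \<longrightarrow> (\<Prod>i<n. cfac k r i) = inverse (r (n - 1))"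
  proof (intro allI)
    fix n show "1 \<le> n \<longrightarrow> n \<le> k - 1 \<longrightarrow> (\<Prod>i<n. cfac k r i) = inverse (r (n - 1))"
    proof (induction n)
      case 0 then show ?case by simp
    next
      case (Suc n)
      show ?case
      proof (cases "n = 0")
        case True then show ?thesis by (simp add: cfac_def)
      next
        case False
        show ?thesis
        proof (intro impI)
          assume "1 \<le> Suc n" "Suc n \<le> k - 1"
          hence "(\<Prod>i<n. cfac k r i) = inverse (r (n - 1))" using Suc.IH False by simp
          moreover have "r (n - 1) \<noteq> 0" using nz \<open>Suc n \<le> k - 1\<close> by simp
          ultimately show "(\<Prod>i<Suc n. cfac k r i) = inverse (r (Suc n - 1))"
            using False \<open>Suc n \<le> k - 1\<close> by (simp add: cfac_def)
        qed
      qed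
    qed
  qed
  hence a0: "(\<Prod>i<k-1. cfac k r i) = inverse (r (k - 1 - 1))" using k by simp
  have e: "k - 1 - 1 = k - 2" by simp
  have a: "(\<Prod>i<k-1. cfac k r i) = inverse (r (k - 2))" using a0 unfolding e .
  have "k = Suc (k - 1)" using k by simp
  hence "(\<Prod>i<k. cfac k r i) = (\<Prod>i<k-1. cfac k r i) * cfac k r (k - 1)"
    by (metis prod.lessThan_Suc)
  also have "\<dots> = 1"
  proof -
    have c: "cfac k r (k - 1) = r (k - 2)" using k unfolding cfac_def e[symmetric] by simp
    have "r (k - 2) \<noteq> 0" using nz k by simp
    thus ?thesis unfolding a c by simp
  qed
  finally show ?thesis .
qed

lemma torus_nz: "r \<in> torus k \<Longrightarrow> i < k - 1 \<Longrightarrow> cmod (r i) = 1"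
  by (auto simp: torus_def PiE_iff)

lemma act_eq: "i < k \<Longrightarrow> torus_act k r p i = (fst (p i), cfac k r i * snd (p i))"
  by (simp add: torus_act_def cfac_def)

lemma cfac_norm: "r \<in> torus k \<Longrightarrow> i < k \<Longrightarrow> cmod (cfac k r i) = 1"
  using torus_nz[of r k] by (auto simp: cfac_def norm_mult norm_inverse)

lemma proj_eq_if:
  assumes "\<forall>i<k. fst (q i) = fst (p i)" "(\<Prod>i<k. snd (q i)) = (\<Prod>i<k. snd (p i))"
  shows "orbit_proj k m q = orbit_proj k m p"
proof -
  have "dsq k m q = dsq k m p" unfolding dsq_def using assms by simp
  thus ?thesis unfolding orbit_proj_alt using assms by (auto intro!: restrict_ext)
qed

lemma act_proj:
  assumes "r \<in> torus k" "k \<ge> 2"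
  shows "orbit_proj k m (torus_act k r p) = orbit_proj k m p"
proof (rule proj_eq_if)
  show "\<forall>i<k. fst (torus_act k r p i) = fst (p i)" by (simp add: act_eq)
  have "(\<Prod>i<k. snd (torus_act k r p i)) = (\<Prod>i<k. cfac k r i * snd (p i))"
    by (simp add: act_eq)
  also have "\<dots> = (\<Prod>i<k. cfac k r i) * (\<Prod>i<k. snd (p i))" by (simp add: prod.distrib)
  also have "(\<Prod>i<k. cfac k r i) = 1"
    by (rule tele) (use assms torus_nz in fastforce)+
  finally show "(\<Prod>i<k. snd (torus_act k r p i)) = (\<Prod>i<k. snd (p i))" by simp
qed

lemma construct:
  fixes u :: "nat \<Rightarrow> complex"
  assumes k: "k \<ge> 2" and nu: "\<forall>i<k. cmod (u i) = 1" and pu: "(\<Prod>i<k. u i) = 1"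
    and qe: "q \<in> extensional {..<k}" and qi: "\<forall>i<k. q i = (fst (p i), u i * snd (p i))"
  shows "\<exists>r\<in>torus k. q = torus_act k r p"
proof -
  define P where "P n = (\<Prod>l<n. u l)" for n
  have Pnz: "P n \<noteq> 0" if "n \<le> k" for n
    unfolding P_def using nu that by (auto simp: prod_zero_iff) (metis less_le_trans norm_zero zero_neq_one)
  have Pn: "cmod (P n) = 1" if "n \<le> k" for n
    unfolding P_def prod_norm[symmetric] using nu that by (auto intro!: prod.neutral)
  define r where "r = (\<lambda>i\<in>{..<k-1}. inverse (P (Suc i)))"
  have rt: "r \<in> torus k"
    unfolding torus_def r_def using Pn by (auto simp: norm_inverse)
  have cf: "cfac k r i = u i" if i: "i < k" for i
  proof -
    consider "i = 0" | "0 < i" "i < k - 1" | "i = k - 1" using i by linarith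
    then show ?thesis
    proof cases
      case 1
      have "r 0 = inverse (u 0)" using k by (simp add: r_def P_def)
      then show ?thesis using 1 k by (simp add: cfac_def)
    next
      case 2
      have "i - 1 < k - 1" "Suc (i - 1) = i" using 2 by auto
      hence r1: "r (i - 1) = inverse (P i)" by (simp add: r_def)
      have r2: "r i = inverse (P i * u i)" using 2 by (simp add: r_def P_def)
      have "P i \<noteq> 0" using Pnz i by simp
      then show ?thesis using 2 r1 r2 by (simp add: cfac_def)
    next
      case 3
      have "k - 1 - 1 < k - 1" "Suc (k - 1 - 1) = k - 1" using k by auto
      hence r1: "r (k - 1 - 1) = inverse (P (k - 1))" using k by (simp add: r_def)
      have "P k = P (k - 1) * u (k - 1)" unfolding P_def using k
        by (metis Suc_diff_1 less_le_trans pos2 prod.lessThan_Suc)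
      hence "P (k - 1) * u (k - 1) = 1" using pu by (simp add: P_def)
      hence "u (k - 1) = inverse (P (k - 1))" by (metis inverse_unique mult.commute)
      moreover have "k - 1 \<noteq> 0" using k by simp
      ultimately show ?thesis using 3 r1 by (simp add: cfac_def)
    qed
  qed
  have "q = torus_act k r p"
  proof
    fix i show "q i = torus_act k r p i"
    proof (cases "i < k")
      case True then show ?thesis using qi cf act_eq by simp
    next
      case False then show ?thesis using qe by (simp add: torus_act_def extensional_def)
    qed
  qed
  thus ?thesis using rt by blast
qed

lemma scaled:
  assumes p: "p \<in> topspace (sph_product k m)" and q: "q \<in> topspace (sph_product k m)"
    and eq: "orbit_proj k m p = orbit_proj k m q"
  shows "\<forall>i<k. \<forall>j<m i - 1. fst (q i) j = (sqrt (dsq k m q) / sqrt (dsq k m p)) * fst (p i) j"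
    and "(\<Prod>i<k. snd (q i)) = complex_of_real (sqrt (dsq k m q) / sqrt (dsq k m p)) * (\<Prod>i<k. snd (p i))"
proof -
  define sp where "sp = sqrt (dsq k m p)"
  define sq where "sq = sqrt (dsq k m q)"
  have sp0: "sp > 0" using dsq_pos[OF p] by (simp add: sp_def)
  have sq0: "sq > 0" using dsq_pos[OF q] by (simp add: sq_def)
  have h1: "(\<lambda>i\<in>{..<k}. \<lambda>j\<in>{..<m i - 1}. fst (p i) j / sp) = (\<lambda>i\<in>{..<k}. \<lambda>j\<in>{..<m i - 1}. fst (q i) j / sq)"
    and h2: "(\<Prod>i<k. snd (p i)) / complex_of_real sp = (\<Prod>i<k. snd (q i)) / complex_of_real sq"
    using eq unfolding orbit_proj_alt sp_def[symmetric] sq_def[symmetric] by auto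
  show "\<forall>i<k. \<forall>j<m i - 1. fst (q i) j = (sqrt (dsq k m q) / sqrt (dsq k m p)) * fst (p i) j"
  proof (intro allI impI)
    fix i j assume i: "i < k" and j: "j < m i - 1"
    have "fst (p i) j / sp = fst (q i) j / sq"
      using fun_cong[OF fun_cong[OF h1, of i], of j] i j by simp
    thus "fst (q i) j = (sqrt (dsq k m q) / sqrt (dsq k m p)) * fst (p i) j"
      unfolding sp_def[symmetric] sq_def[symmetric] using sp0 sq0 by (simp add: field_simps)
  qed
  have "sp \<noteq> 0" "sq \<noteq> 0" using sp0 sq0 by auto
  then show "(\<Prod>i<k. snd (q i)) = complex_of_real (sqrt (dsq k m q) / sqrt (dsq k m p)) * (\<Prod>i<k. snd (p i))"
    using h2 unfolding sp_def[symmetric] sq_def[symmetric] by (simp add: field_simps)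
qed

lemma key:
  assumes p: "p \<in> topspace (sph_product k m)" and q: "q \<in> topspace (sph_product k m)"
    and eq: "orbit_proj k m p = orbit_proj k m q"
  shows "dsq k m q \<le> dsq k m p"
proof (rule ccontr)
  assume "\<not> dsq k m q \<le> dsq k m p"
  hence lt: "dsq k m p < dsq k m q" by simp
  define c where "c = sqrt (dsq k m q) / sqrt (dsq k m p)"
  have "sqrt (dsq k m p) > 0" using dsq_pos[OF p] by simp
  moreover have "sqrt (dsq k m p) < sqrt (dsq k m q)" using lt by simp
  ultimately have c1: "c > 1" by (simp add: c_def)
  have sx: "\<forall>i<k. \<forall>j<m i - 1. fst (q i) j = c * fst (p i) j" using scaled(1)[OF p q eq] by (simp add: c_def)
  have sz: "(\<Prod>i<k. snd (q i)) = complex_of_real c * (\<Prod>i<k. snd (p i))" using scaled(2)[OF p q eq] by (simp add: c_def)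
  define a where "a i = (\<Sum>j<m i - 1. (fst (p i) j)\<^sup>2)" for i
  have aq: "(\<Sum>j<m i - 1. (fst (q i) j)\<^sup>2) = c\<^sup>2 * a i" if "i < k" for i
    unfolding a_def sum_distrib_left using sx that by (auto intro!: sum.cong simp: power_mult_distrib)
  have np: "(cmod (snd (p i)))\<^sup>2 = 1 - a i" if "i < k" for i using sp_mem(1)[OF p that] by (simp add: a_def)
  have nq: "(cmod (snd (q i)))\<^sup>2 = 1 - c\<^sup>2 * a i" if "i < k" for i using sp_mem(1)[OF q that] aq[OF that] by simp
  have "(cmod (\<Prod>i<k. snd (q i)))\<^sup>2 = (\<Prod>i<k. (cmod (snd (q i)))\<^sup>2)"
    unfolding prod_norm[symmetric] prod_power_distrib ..
  also have "\<dots> = (\<Prod>i<k. 1 - c\<^sup>2 * a i)" by (rule prod.cong) (simp_all add: nq)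
  finally have "(\<Prod>i<k. 1 - c\<^sup>2 * a i) = (cmod (\<Prod>i<k. snd (q i)))\<^sup>2" ..
  also have "\<dots> = c\<^sup>2 * (cmod (\<Prod>i<k. snd (p i)))\<^sup>2" unfolding sz using c1 by (simp add: norm_mult power_mult_distrib)
  also have "(cmod (\<Prod>i<k. snd (p i)))\<^sup>2 = (\<Prod>i<k. 1 - a i)"
    unfolding prod_norm[symmetric] prod_power_distrib by (rule prod.cong) (simp_all add: np)
  finally have E: "(\<Prod>i<k. 1 - c\<^sup>2 * a i) = c\<^sup>2 * (\<Prod>i<k. 1 - a i)" .
  show False
  proof (rule scalar_contra[OF _ _ _ _ _ E])
    show "\<forall>i\<in>{..<k}. 0 \<le> a i" by (simp add: a_def sum_nonneg)
    show "\<forall>i\<in>{..<k}. 0 \<le> 1 - a i" using np by (metis lessThan_iff zero_le_power2)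
    show "\<forall>i\<in>{..<k}. 0 \<le> 1 - c\<^sup>2 * a i" using nq by (metis lessThan_iff zero_le_power2)
    show "1 < c\<^sup>2" using c1 by (simp add: one_less_power)
  qed simp
qed

lemma fwd:
  assumes k: "k \<ge> 2" and p: "p \<in> topspace (sph_product k m)" and q: "q \<in> topspace (sph_product k m)"
    and eq: "orbit_proj k m p = orbit_proj k m q"
  shows "\<exists>r\<in>torus k. q = torus_act k r p"
proof -
  have D: "dsq k m q = dsq k m p" using key[OF p q eq] key[OF q p eq[symmetric]] by simp
  have c: "sqrt (dsq k m q) / sqrt (dsq k m p) = 1" using D dsq_pos[OF p] by simp
  have sx: "\<forall>i<k. \<forall>j<m i - 1. fst (q i) j = fst (p i) j" using scaled(1)[OF p q eq] unfolding c by simp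
  have sz: "(\<Prod>i<k. snd (q i)) = (\<Prod>i<k. snd (p i))" using scaled(2)[OF p q eq] unfolding c by simp
  have fe: "fst (q i) = fst (p i)" if i: "i < k" for i
    by (rule PiE_ext[OF sp_mem(2)[OF q i] sp_mem(2)[OF p i]]) (use sx i in auto)
  have nz: "\<forall>i<k. cmod (snd (q i)) = cmod (snd (p i))"
  proof (intro allI impI)
    fix i assume i: "i < k"
    have "(cmod (snd (q i)))\<^sup>2 = (cmod (snd (p i)))\<^sup>2"
      using sp_mem(1)[OF q i] sp_mem(1)[OF p i] unfolding fe[OF i] by linarith
    thus "cmod (snd (q i)) = cmod (snd (p i))" by (simp add: power2_eq_iff_nonneg)
  qed
  obtain u where u: "\<forall>i<k. cmod (u i) = 1 \<and> snd (q i) = u i * snd (p i)" and pu: "(\<Prod>i<k. u i) = 1"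
    using units_exist[of k "\<lambda>i. snd (q i)" "\<lambda>i. snd (p i)"] nz sz by auto
  show ?thesis
  proof (rule construct[OF k _ pu sp_ext[OF q]])
    show "\<forall>i<k. cmod (u i) = 1" using u by simp
    show "\<forall>i<k. q i = (fst (p i), u i * snd (p i))" using u fe by (metis prod.collapse)
  qed
qed

lemma prod_sqrt: "(\<Prod>i<(n::nat). sqrt (g i)) = sqrt (\<Prod>i<n. g i)"
  by (induction n) (simp_all add: real_sqrt_mult)

lemma surj_proj:
  assumes k: "k \<ge> 2" and y: "y \<in> topspace (target_sphere k m)"
  shows "\<exists>p\<in>topspace (sph_product k m). orbit_proj k m p = y"
proof -
  obtain x w where yxw: "y = (x, w)" by (cases y)
  have xP: "x \<in> PiE {..<k} (\<lambda>i. PiE {..<m i - 1} (\<lambda>_. UNIV))"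
    and eq1: "(\<Sum>i<k. \<Sum>j<m i - 1. (x i j)\<^sup>2) + (cmod w)\<^sup>2 = 1"
    using y unfolding yxw top_ts by auto
  define a where "a i = (\<Sum>j<m i - 1. (x i j)\<^sup>2)" for i
  have a0: "0 \<le> a i" for i by (simp add: a_def sum_nonneg)
  have eqa: "(\<Sum>i<k. a i) + (cmod w)\<^sup>2 = 1" using eq1 by (simp add: a_def)
  define M where "M = Max (a ` {..<k})"
  have "0 \<in> {..<k}" using k by simp
  hence kne: "{..<k} \<noteq> {}" by blast
  have aM: "a i \<le> M" if "i < k" for i unfolding M_def using that by (intro Max_ge) auto
  have "M \<in> a ` {..<k}" unfolding M_def by (rule Max_in) (use kne in auto)
  then obtain i0 where i0: "i0 < k" "a i0 = M" by auto
  have M0: "0 \<le> M" using a0 i0 by metis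
  define cm where "cm = (if M = 0 then 1 else 1 / sqrt M)"
  have cm0: "0 \<le> cm" using M0 by (simp add: cm_def)
  have bound: "c\<^sup>2 * a i \<le> 1" if "0 \<le> c" "c \<le> cm" "i < k" for c i
  proof (cases "M = 0")
    case True
    then have "a i = 0" using aM[OF that(3)] a0[of i] by simp
    then show ?thesis by simp
  next
    case False
    hence Mp: "M > 0" using M0 by simp
    have "c\<^sup>2 \<le> cm\<^sup>2" using that by (simp add: power_mono)
    also have "cm\<^sup>2 = 1 / M" using Mp by (simp add: cm_def power_divide)
    finally have "c\<^sup>2 * a i \<le> (1 / M) * M" using aM[OF that(3)] a0[of i]
      by (meson mult_mono order_trans zero_le_power2 divide_nonneg_nonneg zero_le_one M0)
    thus ?thesis using Mp by simp
  qed
  define f where "f c = (\<Prod>i<k. 1 - c\<^sup>2 * a i) - c\<^sup>2 * (cmod w)\<^sup>2" for c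
  have f0: "f 0 = 1" by (simp add: f_def)
  have fcm: "f cm \<le> 0"
  proof (cases "M = 0")
    case True
    hence "\<forall>i\<in>{..<k}. a i = 0" using aM a0 by (simp add: order_antisym)
    hence "(cmod w)\<^sup>2 = 1" using eqa by simp
    thus ?thesis using True \<open>\<forall>i\<in>{..<k}. a i = 0\<close> by (simp add: f_def cm_def)
  next
    case False
    hence Mp: "M > 0" using M0 by simp
    have "cm\<^sup>2 * a i0 = 1" using Mp i0 by (simp add: cm_def power_divide)
    hence P0: "(\<Prod>i<k. 1 - cm\<^sup>2 * a i) = 0" using i0 by (auto simp: prod_zero_iff)
    show ?thesis unfolding f_def P0 by simp
  qed
  have cont: "continuous_on {0..cm} f" unfolding f_def by (intro continuous_intros)
  obtain c where c: "0 \<le> c" "c \<le> cm" "f c = 0" using IVT2'[of f cm 0 0, OF fcm _ cm0 cont] f0 by auto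
  have cpos: "c > 0" using c f0 by (cases "c = 0") auto
  have bd: "\<forall>i<k. c\<^sup>2 * a i \<le> 1" using bound c by auto
  define sv where "sv i = sqrt (1 - c\<^sup>2 * a i)" for i
  define ph where "ph = (if w = 0 then 1 else w / complex_of_real (cmod w))"
  have ph1: "cmod ph = 1" by (simp add: ph_def norm_divide)
  have wph: "complex_of_real (cmod w) * ph = w" by (simp add: ph_def)
  define z where "z i = complex_of_real (sv i) * (if i = 0 then ph else 1)" for i
  define p where "p = (\<lambda>i\<in>{..<k}. ((\<lambda>j\<in>{..<m i - 1}. c * x i j), z i))"
  have nz: "(cmod (z i))\<^sup>2 = 1 - c\<^sup>2 * a i" if "i < k" for i
    using bd that ph1 by (simp add: z_def sv_def norm_mult)
  have sumx: "(\<Sum>j<m i - 1. (c * x i j)\<^sup>2) = c\<^sup>2 * a i" for i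
    by (simp add: a_def sum_distrib_left power_mult_distrib)
  have pin: "p \<in> topspace (sph_product k m)"
    unfolding top_sp p_def using nz sumx by (auto simp: PiE_iff)
  have prodsv: "(\<Prod>i<k. sv i) = c * cmod w"
  proof -
    have "(\<Prod>i<k. sv i) = sqrt (\<Prod>i<k. 1 - c\<^sup>2 * a i)" unfolding sv_def by (rule prod_sqrt)
    also have "(\<Prod>i<k. 1 - c\<^sup>2 * a i) = (c * cmod w)\<^sup>2" using c(3) by (simp add: f_def power_mult_distrib)
    finally show ?thesis using cpos by simp
  qed
  have prodz: "(\<Prod>i<k. z i) = complex_of_real c * w"
  proof -
    have "(\<Prod>i<k. z i) = (\<Prod>i<k. complex_of_real (sv i)) * (\<Prod>i<k. if i = 0 then ph else 1)"
      unfolding z_def by (rule prod.distrib)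
    also have "(\<Prod>i<k. if i = 0 then ph else 1) = ph" using k by (simp add: prod.delta)
    also have "(\<Prod>i<k. complex_of_real (sv i)) = complex_of_real (c * cmod w)" by (simp add: prodsv[symmetric])
    finally show ?thesis using wph by (simp add: mult.assoc)
  qed
  have psnd: "(\<Prod>i<k. snd (p i)) = complex_of_real c * w" unfolding p_def using prodz by simp
  have dsqp: "dsq k m p = c\<^sup>2"
  proof -
    have "dsq k m p = (\<Sum>i<k. c\<^sup>2 * a i) + (cmod (complex_of_real c * w))\<^sup>2"
      unfolding dsq_def psnd using sumx by (simp add: p_def)
    also have "\<dots> = c\<^sup>2 * ((\<Sum>i<k. a i) + (cmod w)\<^sup>2)" using cpos
      by (simp add: sum_distrib_left[symmetric] norm_mult power_mult_distrib distrib_left)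
    finally show ?thesis using eqa by simp
  qed
  have sq: "sqrt (dsq k m p) = c" using dsqp cpos by simp
  have "orbit_proj k m p = y"
  proof -
    have "(\<lambda>i\<in>{..<k}. \<lambda>j\<in>{..<m i - 1}. fst (p i) j / c) = x"
    proof (rule PiE_ext[OF _ xP])
      show "(\<lambda>i\<in>{..<k}. \<lambda>j\<in>{..<m i - 1}. fst (p i) j / c) \<in> PiE {..<k} (\<lambda>i. PiE {..<m i - 1} (\<lambda>_. UNIV))"
        by auto
      fix i assume i: "i \<in> {..<k}"
      show "(\<lambda>i\<in>{..<k}. \<lambda>j\<in>{..<m i - 1}. fst (p i) j / c) i = x i"
      proof (rule PiE_ext[of _ "{..<m i - 1}" "\<lambda>_. UNIV"])
        show "x i \<in> PiE {..<m i - 1} (\<lambda>_. UNIV)" using xP i by auto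
      qed (use i cpos in \<open>auto simp: p_def\<close>)
    qed
    moreover have "(\<Prod>i<k. snd (p i)) / complex_of_real c = w" using psnd cpos by simp
    ultimately show ?thesis unfolding orbit_proj_alt sq yxw by simp
  qed
  thus ?thesis using pin by blast
qed

theorem theorem2:
  fixes k :: nat and m :: "nat \<Rightarrow> nat"
  assumes "k \<ge> 2" and "\<forall>i<k. m i \<ge> 2"
  shows "quotient_map (sph_product k m) (target_sphere k m) (orbit_proj k m) \<and>
         (\<forall>p\<in>topspace (sph_product k m). \<forall>q\<in>topspace (sph_product k m).
            orbit_proj k m p = orbit_proj k m q \<longleftrightarrow> (\<exists>r\<in>torus k. q = torus_act k r p))"
proof
  have "orbit_proj k m ` topspace (sph_product k m) = topspace (target_sphere k m)"
    using proj_in surj_proj[OF assms(1)] by blast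
  then show "quotient_map (sph_product k m) (target_sphere k m) (orbit_proj k m)"
    by (intro continuous_imp_quotient_map cont_proj compact_sp hausdorff_ts)
  show "\<forall>p\<in>topspace (sph_product k m). \<forall>q\<in>topspace (sph_product k m).
            orbit_proj k m p = orbit_proj k m q \<longleftrightarrow> (\<exists>r\<in>torus k. q = torus_act k r p)"
    using fwd[OF assms(1)] act_proj[OF _ assms(1)] by metis
qed

end
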